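(* There is a constant $c$ such that, running the (modified) Ghaffari process described in the context with fully independent marking for $c\log\Delta$ phases, with high probability the number of edges of $G$ incident to nodes that have not made their decision (i.e., are neither in the independent set nor adjacent to a node in it) is $O(n)$.
   Context: Let $G=(V,E)$ be an undirected graph with $n$ nodes and maximum degree $\Delta$. The process runs in phases $t=0,1,2,\dots$ on the graph induced by the undecided nodes (initially all nodes). Each undecided node $v$ has a value $p_t(v)$, with $p_0(v)=1/4$; its effective degree is $d_t(v)=\sum_{u\in N(v)}p_t(u)$, the sum over its undecided neighbors. Then $p_{t+1}(v)=p_t(v)/2$ if $d_t(v)\ge 1/2$, and $p_{t+1}(v)=\min\{2p_t(v),1/4\}$ if $d_t(v)<1/2$. In phase $t$, each undecided node $v$ becomes marked with probability $p_t(v)$, independently of all other nodes; a marked node none of whose undecided neighbors is marked joins the independent set, and it and all its neighbors become decided (are removed). "With high probability" means with probability at least $1-1/n$. *)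

theory Defs
  imports "HOL-Probability.Probability"
begin

definition simple_graph :: "'a set \<Rightarrow> 'a set set \<Rightarrow> bool" where
  "simple_graph V E \<longleftrightarrow> finite V \<and> (\<forall>e\<in>E. e \<subseteq> V \<and> card e = 2)"

definition nbrs :: "'a set set \<Rightarrow> 'a \<Rightarrow> 'a set" where
  "nbrs E v = {u. {u, v} \<in> E}"

definition max_degree :: "'a set \<Rightarrow> 'a set set \<Rightarrow> nat" where
  "max_degree V E = Max ((\<lambda>v. card (nbrs E v)) ` V)"

text \<open>State of the process: the set of undecided nodes and the values p_t.\<close>
type_synonym 'a gstate = "'a set \<times> ('a \<Rightarrow> real)"

definition eff_deg :: "'a set set \<Rightarrow> 'a gstate \<Rightarrow> 'a \<Rightarrow> real" where
  "eff_deg E s v = (\<Sum>u \<in> nbrs E v \<inter> fst s. snd s u)"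

definition joiners :: "'a set set \<Rightarrow> 'a set \<Rightarrow> ('a \<Rightarrow> bool) \<Rightarrow> 'a set" where
  "joiners E U m = {v \<in> U. m v \<and> (\<forall>u \<in> nbrs E v \<inter> U. \<not> m u)}"

definition new_p :: "'a set set \<Rightarrow> 'a gstate \<Rightarrow> 'a \<Rightarrow> real" where
  "new_p E s v = (if eff_deg E s v \<ge> 1/2 then snd s v / 2 else min (2 * snd s v) (1/4))"

definition phase :: "'a set set \<Rightarrow> 'a gstate \<Rightarrow> 'a gstate pmf" where
  "phase E s =
     map_pmf (\<lambda>m. let I = joiners E (fst s) m in
                  (fst s - I - (\<Union>v\<in>I. nbrs E v), new_p E s))
       (Pi_pmf (fst s) False (\<lambda>v. bernoulli_pmf (snd s v)))"

fun run :: "'a set \<Rightarrow> 'a set set \<Rightarrow> nat \<Rightarrow> 'a gstate pmf" where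
  "run V E 0 = return_pmf (V, \<lambda>_. 1/4)"
| "run V E (Suc k) = bind_pmf (run V E k) (phase E)"

definition undecided_edges :: "'a set set \<Rightarrow> 'a gstate \<Rightarrow> nat" where
  "undecided_edges E s = card {e \<in> E. e \<inter> fst s \<noteq> {}}"

end

theory Submission
  imports Defs
begin


lemma prob_pair_times:
  "measure_pmf.prob (pair_pmf A B) (X \<times> Y) = measure_pmf.prob A X * measure_pmf.prob B Y"
proof -
  have "emeasure (measure_pmf (pair_pmf A B)) (X \<times> Y) = (\<integral>\<^sup>+x. indicator (X \<times> Y) x \<partial>pair_pmf A B)"
    by simp
  also have "\<dots> = (\<integral>\<^sup>+a. \<integral>\<^sup>+b. indicator X a * indicator Y b \<partial>B \<partial>A)"
    by (simp add: nn_integral_pair_pmf' indicator_times)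
  also have "\<dots> = (\<integral>\<^sup>+a. indicator X a * emeasure B Y \<partial>A)"
    by (simp add: nn_integral_cmult)
  also have "\<dots> = emeasure A X * emeasure B Y"
    by (simp add: nn_integral_multc)
  finally have e: "emeasure (measure_pmf (pair_pmf A B)) (X \<times> Y) = emeasure A X * emeasure B Y" .
  have "ennreal (measure_pmf.prob (pair_pmf A B) (X \<times> Y)) =
        ennreal (measure_pmf.prob A X * measure_pmf.prob B Y)"
    using e by (simp add: measure_pmf.emeasure_eq_measure ennreal_mult)
  then show ?thesis by (subst (asm) ennreal_inj) auto
qed

lemma prob_Pi_pmf_local:
  assumes "finite A" "A' \<subseteq> A" "J \<subseteq> A'"
    and loc: "\<And>m m'. (\<And>i. i \<in> J \<Longrightarrow> m i = m' i) \<Longrightarrow> (m \<in> X \<longleftrightarrow> m' \<in> X)"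
  shows "measure_pmf.prob (Pi_pmf A' d p) X = measure_pmf.prob (Pi_pmf A d p) X"
proof -
  have "Pi_pmf A' d p = map_pmf (\<lambda>f x. if x \<in> A' then f x else d) (Pi_pmf A d p)"
    using assms by (intro Pi_pmf_subset) auto
  moreover have "(\<lambda>f x. if x \<in> A' then f x else d) -` X = X"
  proof (intro set_eqI)
    fix f :: "'a \<Rightarrow> 'b"
    have "\<And>i. i \<in> J \<Longrightarrow> (if i \<in> A' then f i else d) = f i" using assms(3) by auto
    then have "(\<lambda>x. if x \<in> A' then f x else d) \<in> X \<longleftrightarrow> f \<in> X"
      by (rule loc)
    then show "f \<in> (\<lambda>f x. if x \<in> A' then f x else d) -` X \<longleftrightarrow> f \<in> X" by simp
  qed
  ultimately show ?thesis by simp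
qed

lemma indep_blocks:
  assumes "finite A" "finite K" "\<And>k. k \<in> K \<Longrightarrow> B k \<subseteq> A" "disjoint_family_on B K"
    and loc: "\<And>k m m'. k \<in> K \<Longrightarrow> (\<And>i. i \<in> B k \<Longrightarrow> m i = m' i) \<Longrightarrow> (m \<in> X k \<longleftrightarrow> m' \<in> X k)"
  shows "measure_pmf.prob (Pi_pmf A d p) {m. \<forall>k\<in>K. m \<in> X k} =
           (\<Prod>k\<in>K. measure_pmf.prob (Pi_pmf A d p) (X k))"
  using assms(2,3,4) loc
proof (induction K rule: finite_induct)
  case empty
  then show ?case by simp
next
  case (insert k0 K)
  let ?R = "{m. \<forall>k\<in>K. m \<in> X k}"
  let ?mg = "\<lambda>(f,g) x. if x \<in> B k0 then f x else g x"
  have disj: "\<And>k. k \<in> K \<Longrightarrow> B k \<inter> B k0 = {}"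
    using insert.prems(2) insert.hyps unfolding disjoint_family_on_def by auto
  have A: "A = B k0 \<union> (A - B k0)" using insert.prems(1) by auto
  have "Pi_pmf A d p = Pi_pmf (B k0 \<union> (A - B k0)) d p" using A by simp
  also have "\<dots> = map_pmf ?mg (pair_pmf (Pi_pmf (B k0) d p) (Pi_pmf (A - B k0) d p))"
    using assms(1) insert.prems(1) by (intro Pi_pmf_union) (auto intro: finite_subset)
  finally have eq: "Pi_pmf A d p = \<dots>" .
  have h0: "?mg (f,g) \<in> X k0 \<longleftrightarrow> f \<in> X k0" for f g
    using insert.prems(3)[of k0 "?mg (f,g)" f] by auto
  have hk: "?mg (f,g) \<in> X k \<longleftrightarrow> g \<in> X k" if "k \<in> K" for f g k
  proof -
    have e: "\<And>i. i \<in> B k \<Longrightarrow> ?mg (f,g) i = g i" using disj[OF that] by auto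
    show ?thesis using insert.prems(3)[of k "?mg (f,g)" g, OF insertI2[OF that] e] by simp
  qed
  have pre: "?mg -` {m. \<forall>k\<in>insert k0 K. m \<in> X k} = X k0 \<times> ?R"
  proof -
    have *: "(f,g) \<in> ?mg -` {m. \<forall>k\<in>insert k0 K. m \<in> X k} \<longleftrightarrow> (f,g) \<in> X k0 \<times> ?R" for f g
      using h0[of f g] hk[of _ f g] by auto
    show ?thesis
    proof (rule set_eqI)
      fix z show "z \<in> ?mg -` {m. \<forall>k\<in>insert k0 K. m \<in> X k} \<longleftrightarrow> z \<in> X k0 \<times> ?R"
      proof (cases z)
        case (Pair a b) then show ?thesis using *[of a b] by simp
      qed
    qed
  qed
  have "measure_pmf.prob (Pi_pmf A d p) {m. \<forall>k\<in>insert k0 K. m \<in> X k}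
      = measure_pmf.prob (Pi_pmf (B k0) d p) (X k0) * measure_pmf.prob (Pi_pmf (A - B k0) d p) ?R"
    unfolding eq measure_map_pmf pre prob_pair_times ..
  also have "measure_pmf.prob (Pi_pmf (B k0) d p) (X k0) = measure_pmf.prob (Pi_pmf A d p) (X k0)"
  proof (rule prob_Pi_pmf_local[OF assms(1) _ order.refl])
    show "B k0 \<subseteq> A" using insert.prems(1) by blast
    fix m m' :: "'a \<Rightarrow> 'c" assume "\<And>i. i \<in> B k0 \<Longrightarrow> m i = m' i"
    then show "m \<in> X k0 \<longleftrightarrow> m' \<in> X k0" by (rule insert.prems(3)[OF insertI1])
  qed
  also have "measure_pmf.prob (Pi_pmf (A - B k0) d p) ?R = measure_pmf.prob (Pi_pmf A d p) ?R"
  proof (rule prob_Pi_pmf_local[OF assms(1), where J = "\<Union>k\<in>K. B k"])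
    show "(\<Union>k\<in>K. B k) \<subseteq> A - B k0" using disj insert.prems(1) by auto
    fix m m' :: "'a \<Rightarrow> 'c" assume ag: "\<And>i. i \<in> (\<Union>k\<in>K. B k) \<Longrightarrow> m i = m' i"
    have "m \<in> X k \<longleftrightarrow> m' \<in> X k" if k: "k \<in> K" for k
    proof (rule insert.prems(3)[OF insertI2[OF k]])
      fix i assume "i \<in> B k" then show "m i = m' i" using ag k by blast
    qed
    then show "m \<in> ?R \<longleftrightarrow> m' \<in> ?R" by blast
  next
    show "A - B k0 \<subseteq> A" by blast
  qed
  also have "\<dots> = (\<Prod>k\<in>K. measure_pmf.prob (Pi_pmf A d p) (X k))"
  proof (rule insert.IH)
    show "\<And>k. k \<in> K \<Longrightarrow> B k \<subseteq> A" using insert.prems(1) by blast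
    show "disjoint_family_on B K" using insert.prems(2) by (rule disjoint_family_on_mono[rotated]) auto
    fix k and m m' :: "'a \<Rightarrow> 'c" assume "k \<in> K" "\<And>i. i \<in> B k \<Longrightarrow> m i = m' i"
    then show "m \<in> X k \<longleftrightarrow> m' \<in> X k" by (rule insert.prems(3)[OF insertI2])
  qed
  finally show ?case using insert.hyps by simp
qed

lemma prod_one_minus_ge:
  fixes x :: "'a \<Rightarrow> real"
  assumes "finite W" "\<And>w. w \<in> W \<Longrightarrow> 0 \<le> x w \<and> x w \<le> 1"
  shows "1 - sum x W \<le> (\<Prod>w\<in>W. 1 - x w)"
  using assms
proof (induction W rule: finite_induct)
  case (insert a W)
  have h: "1 - sum x W \<le> (\<Prod>w\<in>W. 1 - x w)" using insert by auto
  have p: "0 \<le> (\<Prod>w\<in>W. 1 - x w)" using insert.prems by (intro prod_nonneg) auto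
  have p1: "(\<Prod>w\<in>W. 1 - x w) \<le> 1" using insert.prems by (intro prod_le_1) auto
  have xa: "0 \<le> x a" "x a \<le> 1" using insert.prems by auto
  have "1 - sum x (insert a W) = (1 - sum x W) - x a" using insert.hyps by simp
  also have "\<dots> \<le> (1 - x a) * (\<Prod>w\<in>W. 1 - x w)"
  proof -
    have "(1 - x a) * (1 - sum x W) \<le> (1 - x a) * (\<Prod>w\<in>W. 1 - x w)"
      using h xa by (intro mult_left_mono) auto
    moreover have "0 \<le> sum x W" using insert.prems by (intro sum_nonneg) auto
    ultimately show ?thesis using xa by (simp add: algebra_simps) (smt (verit) mult_nonneg_nonneg)
  qed
  finally show ?case using insert.hyps by simp
qed simp

lemma greedy_subset:
  fixes x :: "'a \<Rightarrow> real"
  assumes "finite L" "\<And>u. u \<in> L \<Longrightarrow> 0 \<le> x u \<and> x u \<le> b" "a \<le> sum x L" "0 < a"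
  shows "\<exists>L'\<subseteq>L. a \<le> sum x L' \<and> sum x L' < a + b"
  using assms
proof (induction L rule: finite_induct)
  case (insert u L)
  show ?case
  proof (cases "a \<le> sum x L")
    case True
    then obtain L' where "L' \<subseteq> L" "a \<le> sum x L' \<and> sum x L' < a + b"
      using insert by auto
    then show ?thesis by blast
  next
    case False
    have "x u \<le> b" using insert.prems(1)[of u] by auto
    then have "sum x (insert u L) < a + b" using False insert.hyps by simp
    moreover have "a \<le> sum x (insert u L)" using insert.prems(2) .
    ultimately show ?thesis by (intro exI[of _ "insert u L"]) auto
  qed
qed simp



lemma nbrs_sym: "u \<in> nbrs E v \<longleftrightarrow> v \<in> nbrs E u"
  by (simp add: nbrs_def insert_commute)

lemma nbrs_sub: "simple_graph V E \<Longrightarrow> nbrs E v \<subseteq> V"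
  unfolding simple_graph_def nbrs_def by auto

lemma nbrs_fin: "simple_graph V E \<Longrightarrow> finite (nbrs E v)"
  using nbrs_sub finite_subset unfolding simple_graph_def by metis

lemma nbrs_irrefl: "simple_graph V E \<Longrightarrow> v \<notin> nbrs E v"
  unfolding simple_graph_def nbrs_def by force

lemma nbrs_out: "simple_graph V E \<Longrightarrow> v \<notin> V \<Longrightarrow> nbrs E v = {}"
  unfolding simple_graph_def nbrs_def by auto

lemma card_nbrs_le: "simple_graph V E \<Longrightarrow> card (nbrs E v) \<le> max_degree V E"
proof (cases "v \<in> V")
  case True
  assume g: "simple_graph V E"
  then have "finite V" by (simp add: simple_graph_def)
  then show ?thesis using True unfolding max_degree_def by (intro Max_ge) auto
next
  case False
  assume "simple_graph V E" then show ?thesis using False nbrs_out[of V E v] by simp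
qed

definition newU :: "'a set set \<Rightarrow> 'a set \<Rightarrow> ('a \<Rightarrow> bool) \<Rightarrow> 'a set" where
  "newU E U m = U - joiners E U m - (\<Union>v\<in>joiners E U m. nbrs E v)"

lemma phase_alt: "phase E s = map_pmf (\<lambda>m. (newU E (fst s) m, new_p E s))
   (Pi_pmf (fst s) False (\<lambda>v. bernoulli_pmf (snd s v)))"
  by (simp add: phase_def newU_def Let_def)

lemma newU_sub: "newU E U m \<subseteq> U" by (auto simp: newU_def)

definition pow2 :: "real \<Rightarrow> bool" where "pow2 x \<longleftrightarrow> (\<exists>j::nat. 2 \<le> j \<and> x = 1 / 2 ^ j)"

lemma inv_pow_le: "i \<le> j \<Longrightarrow> 1/(2::real)^j \<le> 1/2^i"
  by (intro divide_left_mono power_increasing) auto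

lemma pow2_bounds: "pow2 x \<Longrightarrow> 0 < x \<and> x \<le> 1/4"
proof -
  assume "pow2 x"
  then obtain j :: nat where j: "2 \<le> j" "x = 1/2^j" by (auto simp: pow2_def)
  have "1/(2::real)^j \<le> 1/2^2" using j by (intro inv_pow_le)
  then show ?thesis using j by simp
qed

lemma pow2_le8: "pow2 x \<Longrightarrow> x \<noteq> 1/4 \<Longrightarrow> x \<le> 1/8"
proof -
  assume "pow2 x" "x \<noteq> 1/4"
  then obtain j :: nat where j: "2 \<le> j" "x = 1/2^j" by (auto simp: pow2_def)
  then have "j \<noteq> 2" using \<open>x \<noteq> 1/4\<close> by auto
  then have "1/(2::real)^j \<le> 1/2^3" using j by (intro inv_pow_le) auto
  then show ?thesis using j by simp
qed

lemma pow2_half: "pow2 x \<Longrightarrow> pow2 (x/2)"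
proof -
  assume "pow2 x"
  then obtain j :: nat where j: "2 \<le> j" "x = 1/2^j" by (auto simp: pow2_def)
  then show ?thesis unfolding pow2_def by (intro exI[of _ "Suc j"]) auto
qed

lemma pow2_double: "pow2 x \<Longrightarrow> pow2 (min (2*x) (1/4))"
proof -
  assume "pow2 x"
  then obtain j :: nat where j: "2 \<le> j" "x = 1/2^j" by (auto simp: pow2_def)
  show ?thesis
  proof (cases "j = 2")
    case True
    then show ?thesis using j by (auto simp: pow2_def intro!: exI[of _ 2])
  next
    case False
    then obtain i where i: "j = Suc i" "2 \<le> i" using j by (cases j) auto
    have "1/(2::real)^i \<le> 1/2^2" using i by (intro inv_pow_le) auto
    moreover have "2 * x = 1/2^i" using i j by simp
    ultimately have "2 * x \<le> 1/4" by simp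
    then show ?thesis using i j by (auto simp: pow2_def intro!: exI[of _ i])
  qed
qed

lemma new_p_pow2: "pow2 (snd s v) \<Longrightarrow> pow2 (new_p E s v)"
  unfolding new_p_def using pow2_half pow2_double by auto

definition ginv :: "'a set \<Rightarrow> 'a gstate \<Rightarrow> bool" where
  "ginv V s \<longleftrightarrow> fst s \<subseteq> V \<and> (\<forall>v. pow2 (snd s v))"

lemma finite_set_Pi_bern:
  assumes "finite U"
  shows "finite (set_pmf (Pi_pmf U False (\<lambda>v. bernoulli_pmf (q v))))"
proof -
  have "set_pmf (Pi_pmf U False (\<lambda>v. bernoulli_pmf (q v))) \<subseteq> PiE_dflt U False (\<lambda>_. UNIV)"
    using set_Pi_pmf_subset'[OF assms, of False "\<lambda>v. bernoulli_pmf (q v)"]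
    by (auto simp: PiE_dflt_def)
  moreover have "finite (PiE_dflt U False (\<lambda>_. (UNIV :: bool set)))"
    using assms by (intro finite_PiE_dflt) auto
  ultimately show ?thesis by (rule finite_subset)
qed

lemma set_phase: "s' \<in> set_pmf (phase E s) \<Longrightarrow> fst s' \<subseteq> fst s \<and> snd s' = new_p E s"
  unfolding phase_alt by (auto simp: newU_def)

lemma finite_phase: "finite (fst s) \<Longrightarrow> finite (set_pmf (phase E s))"
  unfolding phase_alt by (simp add: finite_set_Pi_bern)

lemma run_inv: "s \<in> set_pmf (run V E k) \<Longrightarrow> ginv V s"
proof (induction k arbitrary: s)
  case 0
  then show ?case by (auto simp: ginv_def pow2_def intro!: exI[of _ 2])
next
  case (Suc k)
  then obtain s0 where s0: "s0 \<in> set_pmf (run V E k)" "s \<in> set_pmf (phase E s0)" by auto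
  have i: "ginv V s0" by (rule Suc.IH[OF s0(1)])
  have "pow2 (new_p E s0 v)" for v using i new_p_pow2[of s0 v E] by (auto simp: ginv_def)
  then show ?case using i set_phase[OF s0(2)] by (auto simp: ginv_def)
qed

lemma finite_run: "finite V \<Longrightarrow> finite (set_pmf (run V E k))"
proof (induction k)
  case (Suc k)
  have "set_pmf (run V E (Suc k)) = (\<Union>s\<in>set_pmf (run V E k). set_pmf (phase E s))" by simp
  moreover have "finite (fst s)" if "s \<in> set_pmf (run V E k)" for s
    using run_inv[OF that] Suc.prems by (auto simp: ginv_def intro: finite_subset)
  ultimately show ?case using Suc by (auto intro!: finite_phase)
qed simp



definition Dm :: "'a set set \<Rightarrow> 'a gstate \<Rightarrow> 'a \<Rightarrow> real" where
  "Dm E s v = max (eff_deg E s v) (1/4)"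
definition Fp :: "'a set set \<Rightarrow> nat \<Rightarrow> 'a gstate \<Rightarrow> 'a \<Rightarrow> real" where
  "Fp E t s v = 2^t / (4 * snd s v) * Dm E s v ^ 4"
definition dlow :: "'a set set \<Rightarrow> 'a gstate \<Rightarrow> 'a \<Rightarrow> real" where
  "dlow E s v = (\<Sum>u\<in>{u\<in>nbrs E v \<inter> fst s. eff_deg E s u < 1/2}. snd s u)"
definition golden :: "'a set set \<Rightarrow> 'a gstate \<Rightarrow> 'a \<Rightarrow> bool" where
  "golden E s v \<longleftrightarrow> (snd s v = 1/4 \<and> eff_deg E s v < 1/2) \<or>
                     (1/8 \<le> eff_deg E s v \<and> eff_deg E s v / 10 \<le> dlow E s v)"

lemma core:
  fixes p p' d dl d' :: real
  assumes p: "0 < p" "p \<le> 1/4" "p \<noteq> 1/4 \<Longrightarrow> p \<le> 1/8"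
    and p': "p' = (if 1/2 \<le> d then p/2 else min (2*p) (1/4))"
    and dl: "0 \<le> dl" "dl \<le> d" and d': "0 \<le> d'" "2*d' \<le> d + 3*dl"
  shows "2*p/p' * (max d' (1/4))^4 \<le>
     (if (p = 1/4 \<and> d < 1/2) \<or> (1/8 \<le> d \<and> d/10 \<le> dl) then 64 else 1) * (max d (1/4))^4"
proof (cases "(p = 1/4 \<and> d < 1/2) \<or> (1/8 \<le> d \<and> d/10 \<le> dl)")
  case True
  have pp: "p/2 \<le> p'" "0 < p'" using p p' by auto
  have r: "2*p/p' \<le> 4" using pp p by (simp add: field_simps)
  have "d' \<le> 2*d" using d' dl by linarith
  then have "max d' (1/4) \<le> 2 * max d (1/4)" by (auto simp: max_def)
  then have "(max d' (1/4))^4 \<le> (2 * max d (1/4))^4" by (intro power_mono) auto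
  then have "(max d' (1/4))^4 \<le> 16 * (max d (1/4))^4" by (simp add: power_mult_distrib)
  then have "2*p/p' * (max d' (1/4))^4 \<le> 4 * (16 * (max d (1/4))^4)"
    using r pp p by (intro mult_mono) auto
  then have "2*p/p' * (max d' (1/4))^4 \<le> 64 * (max d (1/4))^4" by simp
  then show ?thesis by (subst if_P[OF True])
next
  case False
  show ?thesis
  proof (cases "1/2 \<le> d")
    case True
    have "dl < d/10" using False True by auto
    then have "d' \<le> 13/20 * d" using d' by linarith
    then have m: "max d' (1/4) \<le> 13/20 * max d (1/4)" using True by (auto simp: max_def)
    have "(max d' (1/4))^4 \<le> (13/20 * max d (1/4))^4" using m by (intro power_mono) auto
    also have "\<dots> = (13/20)^4 * (max d (1/4))^4" by (rule power_mult_distrib)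
    finally have h: "(max d' (1/4))^4 \<le> (13/20)^4 * (max d (1/4))^4" .
    have "2*p/p' = 4" using True p p' by auto
    then have "2*p/p' * (max d' (1/4))^4 \<le> 4 * ((13/20)^4 * (max d (1/4))^4)" using h by simp
    also have "\<dots> = (4 * (13/20)^4) * (max d (1/4))^4" by (simp only: mult.assoc)
    also have "\<dots> \<le> 1 * (max d (1/4))^4" by (intro mult_right_mono) (auto simp: power4_eq_xxxx)
    finally show ?thesis by (subst if_not_P[OF False])
  next
    case dsmall: False
    have "p \<noteq> 1/4" using False dsmall by auto
    then have "p \<le> 1/8" using p by auto
    then have "p' = 2*p" using dsmall p' by auto
    then have r: "2*p/p' = 1" using p by auto
    have "max d' (1/4) \<le> max d (1/4)"
    proof (cases "d < 1/8")
      case True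
      then have "d' < 1/4" using d' dl by linarith
      then show ?thesis by auto
    next
      case False
      then have "dl < d/10" using \<open>\<not> ((p = 1/4 \<and> d < 1/2) \<or> (1/8 \<le> d \<and> d/10 \<le> dl))\<close> by auto
      then have "d' \<le> d" using d' by linarith
      then show ?thesis by auto
    qed
    then have "(max d' (1/4))^4 \<le> (max d (1/4))^4" by (intro power_mono) auto
    then have "2*p/p' * (max d' (1/4))^4 \<le> 1 * (max d (1/4))^4" using r by simp
    then show ?thesis by (subst if_not_P[OF False])
  qed
qed

lemma eff_deg_nonneg: "(\<And>u. 0 \<le> snd s u) \<Longrightarrow> 0 \<le> eff_deg E s v"
  unfolding eff_deg_def by (intro sum_nonneg) auto

lemma new_p_le: "0 \<le> snd s u \<Longrightarrow> new_p E s u \<le> (if eff_deg E s u < 1/2 then 2 * snd s u else snd s u / 2)"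
  unfolding new_p_def by auto

lemma step_deg:
  assumes g: "simple_graph V E" and pw: "\<And>u. pow2 (snd s u)" and U': "U' \<subseteq> fst s"
  shows "2 * eff_deg E (U', new_p E s) v \<le> eff_deg E s v + 3 * dlow E s v"
    and "0 \<le> dlow E s v" "dlow E s v \<le> eff_deg E s v"
proof -
  define N where "N = nbrs E v \<inter> fst s"
  define L where "L = {u\<in>N. eff_deg E s u < 1/2}"
  have fN: "finite N" using nbrs_fin[OF g] by (auto simp: N_def)
  have LN: "L \<subseteq> N" by (auto simp: L_def)
  have pos: "\<And>u. 0 < snd s u" using pow2_bounds[OF pw] by simp
  have npos: "\<And>u. 0 < new_p E s u" using pow2_bounds[OF new_p_pow2[OF pw]] by simp
  have dl: "dlow E s v = sum (snd s) L" by (simp add: dlow_def L_def N_def)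
  have d: "eff_deg E s v = sum (snd s) N" by (simp add: eff_deg_def N_def)
  have "eff_deg E (U', new_p E s) v = (\<Sum>u\<in>nbrs E v \<inter> U'. new_p E s u)"
    by (simp add: eff_deg_def)
  also have "\<dots> \<le> (\<Sum>u\<in>N. new_p E s u)"
    using U' fN npos by (intro sum_mono2) (auto simp: N_def less_imp_le)
  also have "\<dots> = (\<Sum>u\<in>L. new_p E s u) + (\<Sum>u\<in>N - L. new_p E s u)"
    using fN LN by (simp add: sum.subset_diff)
  also have "\<dots> \<le> (\<Sum>u\<in>L. 2 * snd s u) + (\<Sum>u\<in>N - L. snd s u / 2)"
    by (intro add_mono sum_mono) (auto simp: L_def new_p_def)
  also have "\<dots> = 2 * sum (snd s) L + (sum (snd s) N - sum (snd s) L)/2"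
    using fN LN by (simp add: sum_distrib_left sum_divide_distrib[symmetric] sum_diff)
  finally have X: "eff_deg E (U', new_p E s) v \<le> 2 * sum (snd s) L + (sum (snd s) N - sum (snd s) L)/2" .
  have eq: "2 * (2 * a + (b - a)/2) = b + 3 * a" for a b :: real by (simp add: field_simps)
  have "2 * eff_deg E (U', new_p E s) v \<le> 2 * (2 * sum (snd s) L + (sum (snd s) N - sum (snd s) L)/2)"
    using X by (rule mult_left_mono) simp
  also have "\<dots> = sum (snd s) N + 3 * sum (snd s) L" by (rule eq)
  finally show "2 * eff_deg E (U', new_p E s) v \<le> eff_deg E s v + 3 * dlow E s v"
    using dl d by simp
  show "0 \<le> dlow E s v" using dl pos by (auto intro: sum_nonneg less_imp_le)
  show "dlow E s v \<le> eff_deg E s v" using dl d fN LN pos by (auto intro: sum_mono2 less_imp_le)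
qed

lemma ratio:
  assumes g: "simple_graph V E" and pw: "\<And>u. pow2 (snd s u)" and U': "U' \<subseteq> fst s"
  shows "Fp E (Suc t) (U', new_p E s) v \<le> (if golden E s v then 64 else 1) * Fp E t s v"
proof -
  let ?p = "snd s v" and ?p' = "new_p E s v" and ?d = "eff_deg E s v"
  let ?d' = "eff_deg E (U', new_p E s) v" and ?dl = "dlow E s v"
  have pb: "0 < ?p" "?p \<le> 1/4" using pow2_bounds[OF pw] by auto
  have p8: "?p \<noteq> 1/4 \<Longrightarrow> ?p \<le> 1/8" using pow2_le8[OF pw] by auto
  have p'b: "0 < ?p'" using pow2_bounds[OF new_p_pow2[OF pw]] by auto
  have pos: "\<And>u. 0 \<le> new_p E s u" using pow2_bounds[OF new_p_pow2[OF pw]] by (simp add: less_imp_le)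
  have pos0: "\<And>u. 0 \<le> snd s u" using pow2_bounds[OF pw] by (simp add: less_imp_le)
  have c: "2*?p/?p' * (max ?d' (1/4))^4 \<le>
     (if (?p = 1/4 \<and> ?d < 1/2) \<or> (1/8 \<le> ?d \<and> ?d/10 \<le> ?dl) then 64 else 1) * (max ?d (1/4))^4"
    by (rule core[OF pb p8 _ step_deg(2,3)[OF g pw U'] eff_deg_nonneg step_deg(1)[OF g pw U']])
       (auto simp: new_p_def pos pos0)
  have "Fp E (Suc t) (U', new_p E s) v = 2^t / (4 * ?p) * (2*?p/?p' * (max ?d' (1/4))^4)"
    using pb p'b by (simp add: Fp_def Dm_def field_simps)
  also have "\<dots> \<le> 2^t / (4 * ?p) * ((if golden E s v then 64 else 1) * (max ?d (1/4))^4)"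
    using c pb by (intro mult_left_mono) (auto simp: golden_def)
  also have "\<dots> = (if golden E s v then 64 else 1) * Fp E t s v"
    by (simp add: Fp_def Dm_def)
  finally show ?thesis .
qed



abbreviation Mk :: "'a gstate \<Rightarrow> ('a \<Rightarrow> bool) pmf" where
  "Mk s \<equiv> Pi_pmf (fst s) False (\<lambda>v. bernoulli_pmf (snd s v))"

lemma prob_event:
  assumes fin: "finite (fst s)" and pw: "\<And>u. pow2 (snd s u)"
    and v: "v \<in> fst s" and W: "W \<subseteq> fst s" "v \<notin> W"
  shows "measure_pmf.prob (Mk s) {m. m v \<and> (\<forall>w\<in>W. \<not> m w)} = snd s v * (\<Prod>w\<in>W. 1 - snd s w)"
proof -
  define Bs where "Bs x = (if x = v then {True} else if x \<in> W then {False} else UNIV)" for x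
  have pb: "0 \<le> snd s u \<and> snd s u \<le> 1" for u
  proof -
    have a: "0 < snd s u" and b: "snd s u \<le> 1/4" using pow2_bounds[OF pw[of u]] by auto
    show ?thesis
    proof
      show "0 \<le> snd s u" using a by linarith
      show "snd s u \<le> 1" using b by linarith
    qed
  qed
  have set: "{m. m v \<and> (\<forall>w\<in>W. \<not> m w)} = Pi (fst s) Bs"
    using v W by (auto simp: Bs_def Pi_def)
  have bt: "measure_pmf.prob (bernoulli_pmf (snd s x)) (Bs x) =
      (if x = v then snd s v else if x \<in> W then 1 - snd s x else 1)" for x
    using pb[of x] by (auto simp: Bs_def measure_pmf_single)
  have "measure_pmf.prob (Mk s) {m. m v \<and> (\<forall>w\<in>W. \<not> m w)} =
        (\<Prod>x\<in>fst s. (if x = v then snd s v else if x \<in> W then 1 - snd s x else 1))"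
    unfolding set by (simp add: measure_Pi_pmf_Pi[OF fin] bt)
  also have "\<dots> = snd s v * (\<Prod>x\<in>fst s - {v}. (if x = v then snd s v else if x \<in> W then 1 - snd s x else 1))"
    using fin v by (simp add: prod.remove)
  also have "(\<Prod>x\<in>fst s - {v}. (if x = v then snd s v else if x \<in> W then 1 - snd s x else 1))
     = (\<Prod>x\<in>W. (if x = v then snd s v else if x \<in> W then 1 - snd s x else 1))"
    using fin W by (intro prod.mono_neutral_right) auto
  also have "\<dots> = (\<Prod>x\<in>W. 1 - snd s x)"
    using W by (intro prod.cong) auto
  finally show ?thesis .
qed

lemma golden_prob:
  assumes g: "simple_graph V E" and fin: "finite (fst s)" and pw: "\<And>u. pow2 (snd s u)"
    and v: "v \<in> fst s" and gold: "golden E s v"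
  shows "1/400 \<le> measure_pmf.prob (Mk s) {m. v \<notin> newU E (fst s) m}"
proof -
  let ?U = "fst s" and ?p = "snd s"
  have pb: "\<And>u. 0 < ?p u \<and> ?p u \<le> 1/4" using pow2_bounds[OF pw] by simp
  have pb1: "0 \<le> ?p u \<and> ?p u \<le> 1" for u
  proof -
    have a: "0 < ?p u" and b: "?p u \<le> 1/4" using pb[of u] by auto
    show ?thesis
    proof
      show "0 \<le> ?p u" using a by linarith
      show "?p u \<le> 1" using b by linarith
    qed
  qed
  show ?thesis
  proof (cases "?p v = 1/4 \<and> eff_deg E s v < 1/2")
    case True
    let ?W = "nbrs E v \<inter> ?U"
    have fW: "finite ?W" using nbrs_fin[OF g] by auto
    have sub: "{m. m v \<and> (\<forall>w\<in>?W. \<not> m w)} \<subseteq> {m. v \<notin> newU E ?U m}"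
      using v by (auto simp: newU_def joiners_def)
    have "1/2 \<le> 1 - sum ?p ?W" using True by (simp add: eff_deg_def)
    also have "\<dots> \<le> (\<Prod>w\<in>?W. 1 - ?p w)" using fW pb1 by (intro prod_one_minus_ge) auto
    finally have h: "1/2 \<le> (\<Prod>w\<in>?W. 1 - ?p w)" .
    have pv: "?p v = 1/4" using True by simp
    have "1/400 \<le> 1/4 * (\<Prod>w\<in>?W. 1 - ?p w)" using h by linarith
    then have "1/400 \<le> ?p v * (\<Prod>w\<in>?W. 1 - ?p w)" by (simp only: pv)
    also have "\<dots> = measure_pmf.prob (Mk s) {m. m v \<and> (\<forall>w\<in>?W. \<not> m w)}"
      using nbrs_irrefl[OF g, of v] by (intro prob_event[symmetric] fin pw v) auto
    also have "\<dots> \<le> measure_pmf.prob (Mk s) {m. v \<notin> newU E ?U m}"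
      by (intro measure_pmf.finite_measure_mono sub) auto
    finally show ?thesis .
  next
    case False
    then have g2: "1/8 \<le> eff_deg E s v" "eff_deg E s v / 10 \<le> dlow E s v"
      using gold by (auto simp: golden_def)
    define L where "L = {u\<in>nbrs E v \<inter> ?U. eff_deg E s u < 1/2}"
    have fL: "finite L" using nbrs_fin[OF g] by (auto simp: L_def)
    have "1/80 \<le> sum ?p L" using g2 by (simp add: dlow_def L_def)
    then obtain L' where L': "L' \<subseteq> L" "1/80 \<le> sum ?p L'" "sum ?p L' < 1/80 + 1/4"
      using greedy_subset[OF fL, of ?p "1/4" "1/80"] pb by (auto simp: less_imp_le)
    have fL': "finite L'" using fL L' finite_subset by blast
    have L'U: "L' \<subseteq> ?U" using L' by (auto simp: L_def)
    define W where "W u = (nbrs E u \<inter> ?U \<union> L') - {u}" for u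
    define A where "A u = {m. m u \<and> (\<forall>w\<in>W u. \<not> m w)}" for u
    have fWu: "finite (W u)" for u using nbrs_fin[OF g] fL' by (auto simp: W_def)
    have disj: "disjoint_family_on A L'"
      unfolding disjoint_family_on_def A_def W_def by auto
    have sub: "(\<Union>u\<in>L'. A u) \<subseteq> {m. v \<notin> newU E ?U m}"
    proof
      fix m assume "m \<in> (\<Union>u\<in>L'. A u)"
      then obtain u where u: "u \<in> L'" "m u" "\<forall>w\<in>W u. \<not> m w" by (auto simp: A_def)
      have "u \<in> ?U" "u \<in> nbrs E v" using u L' by (auto simp: L_def)
      then have "u \<in> joiners E ?U m" using u nbrs_irrefl[OF g, of u]
        by (auto simp: joiners_def W_def)
      moreover have "v \<in> nbrs E u" using \<open>u \<in> nbrs E v\<close> nbrs_sym by metis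
      ultimately show "m \<in> {m. v \<notin> newU E ?U m}" by (auto simp: newU_def)
    qed
    have each: "?p u / 5 \<le> measure_pmf.prob (Mk s) (A u)" if u: "u \<in> L'" for u
    proof -
      have uL: "u \<in> ?U" "eff_deg E s u < 1/2" using u L' by (auto simp: L_def)
      have "sum ?p (W u) \<le> sum ?p (nbrs E u \<inter> ?U \<union> L')"
        using fWu nbrs_fin[OF g] fL' pb by (intro sum_mono2) (auto simp: W_def less_imp_le)
      also have "\<dots> = sum ?p (nbrs E u \<inter> ?U) + sum ?p L' - sum ?p ((nbrs E u \<inter> ?U) \<inter> L')"
        using nbrs_fin[OF g] fL' by (intro sum_Un) auto
      also have "\<dots> \<le> sum ?p (nbrs E u \<inter> ?U) + sum ?p L'"
        using pb1 by (simp add: sum_nonneg)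
      also have "\<dots> < 1/2 + (1/80 + 1/4)" using uL L' by (simp add: eff_deg_def)
      finally have "1/5 \<le> 1 - sum ?p (W u)" by simp
      also have "\<dots> \<le> (\<Prod>w\<in>W u. 1 - ?p w)" using fWu pb1 by (intro prod_one_minus_ge) auto
      finally have "?p u / 5 \<le> ?p u * (\<Prod>w\<in>W u. 1 - ?p w)"
        using pb[of u] by (simp add: mult_left_mono[of "1/5", simplified] divide_simps)
      also have "\<dots> = measure_pmf.prob (Mk s) (A u)"
        unfolding A_def using uL L'U by (intro prob_event[symmetric] fin pw) (auto simp: W_def)
      finally show ?thesis .
    qed
    have "1/400 \<le> sum ?p L' / 5" using L' by simp
    also have "\<dots> = (\<Sum>u\<in>L'. ?p u / 5)" by (simp add: sum_divide_distrib)
    also have "\<dots> \<le> (\<Sum>u\<in>L'. measure_pmf.prob (Mk s) (A u))" using each by (intro sum_mono) auto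
    also have "\<dots> = measure_pmf.prob (Mk s) (\<Union>u\<in>L'. A u)"
      using fL' disj by (intro measure_pmf.finite_measure_finite_Union[symmetric]) auto
    also have "\<dots> \<le> measure_pmf.prob (Mk s) {m. v \<notin> newU E ?U m}"
      by (intro measure_pmf.finite_measure_mono sub) auto
    finally show ?thesis .
  qed
qed



definition th :: real where "th = 1/2394"

definition W :: "'a set set \<Rightarrow> nat \<Rightarrow> 'a set \<Rightarrow> 'a gstate \<Rightarrow> real" where
  "W E t S s = (\<Prod>v\<in>S. if v \<in> fst s then Fp E t s v powr th else 0)"

definition B2 :: "'a set set \<Rightarrow> 'a \<Rightarrow> 'a set" where
  "B2 E v = insert v (nbrs E v \<union> (\<Union>u\<in>nbrs E v. nbrs E u))"

definition far :: "'a set set \<Rightarrow> 'a set \<Rightarrow> bool" where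
  "far E S \<longleftrightarrow> (\<forall>u\<in>S. \<forall>w\<in>S. u \<noteq> w \<longrightarrow> B2 E u \<inter> B2 E w = {})"

lemma th_bound: "64 powr th * (399/400) \<le> (1::real)"
proof -
  have b: "1 + real 399 * (1/399) \<le> (1 + 1/399::real) ^ 399"
    by (rule Bernoulli_inequality) simp
  then have "(2::real) \<le> (400/399) ^ 399" by simp
  then have "(2::real)^6 \<le> ((400/399) ^ 399)^6" by (intro power_mono) auto
  then have h: "(64::real) \<le> (400/399) ^ 2394" by (simp add: power_mult[symmetric])
  have "64 powr th \<le> ((400/399) ^ 2394) powr th" using h by (intro powr_mono2) (auto simp: th_def)
  also have "((400/399::real) ^ 2394) powr th = 400/399"
  proof -
    have e1: "(400/399::real)^2394 = (400/399) powr (real 2394)" by (rule powr_realpow[symmetric]) simp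
    have "((400/399::real)^2394) powr th = ((400/399) powr (real 2394)) powr th" by (simp only: e1)
    also have "\<dots> = (400/399) powr (real 2394 * th)" by (rule powr_powr)
    also have "real 2394 * th = 1" by (simp add: th_def)
    finally show ?thesis by simp
  qed
  finally have "64 powr th \<le> (400/399::real)" .
  then have "64 powr th * (399/400) \<le> (400/399) * (399/400::real)" by (intro mult_right_mono) auto
  then show ?thesis by simp
qed

lemma newU_iff: "v \<in> newU E U m \<longleftrightarrow> v \<in> U \<and> v \<notin> joiners E U m \<and> (\<forall>x\<in>nbrs E v. x \<notin> joiners E U m)"
proof -
  have e: "v \<in> (\<Union>x\<in>joiners E U m. nbrs E x) \<longleftrightarrow> (\<exists>x\<in>nbrs E v. x \<in> joiners E U m)"
    by (auto simp: nbrs_def insert_commute)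
  show ?thesis unfolding newU_def using e by auto
qed

lemma newU_local:
  assumes ag: "\<And>i. i \<in> B2 E v \<inter> U \<Longrightarrow> m i = m' i"
  shows "v \<in> newU E U m \<longleftrightarrow> v \<in> newU E U m'"
proof -
  have J: "x \<in> joiners E U m \<longleftrightarrow> x \<in> joiners E U m'" if x: "x \<in> insert v (nbrs E v)" for x
  proof -
    have "x \<in> U \<Longrightarrow> m x = m' x" using x ag by (auto simp: B2_def)
    moreover have "\<And>u. u \<in> nbrs E x \<inter> U \<Longrightarrow> m u = m' u" using x ag by (auto simp: B2_def)
    ultimately show ?thesis unfolding joiners_def by auto
  qed
  show ?thesis unfolding newU_iff using J by blast
qed

lemma Fp_nonneg: "(\<And>u. 0 \<le> snd s u) \<Longrightarrow> 0 \<le> Fp E t s v"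
  unfolding Fp_def Dm_def by (intro mult_nonneg_nonneg divide_nonneg_nonneg) auto

lemma W_nonneg: "0 \<le> W E t S s"
  unfolding W_def by (intro prod_nonneg) auto

lemma expect_zero:
  assumes "finite (set_pmf M)" "\<And>x. x \<in> set_pmf M \<Longrightarrow> f x = 0"
  shows "measure_pmf.expectation M (f :: _ \<Rightarrow> real) = 0"
proof -
  have "measure_pmf.expectation M f = (\<Sum>a\<in>{}. f a * pmf M a)"
    using assms by (intro integral_measure_pmf_real) auto
  then show ?thesis by simp
qed

lemma W_step:
  assumes g: "simple_graph V E" and iv: "ginv V s" and fS: "finite S" and fr: "far E S"
  shows "measure_pmf.expectation (phase E s) (W E (Suc t) S) \<le> W E t S s"
proof -
  let ?U = "fst s"
  have fV: "finite V" using g by (simp add: simple_graph_def)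
  have fU: "finite ?U" using iv fV by (auto simp: ginv_def intro: finite_subset)
  have pw: "\<And>u. pow2 (snd s u)" using iv by (simp add: ginv_def)
  have pos0: "\<And>u. 0 \<le> snd s u" using pow2_bounds[OF pw] by (simp add: less_imp_le)
  have npos0: "\<And>u. 0 \<le> new_p E s u" using pow2_bounds[OF new_p_pow2[OF pw]] by (simp add: less_imp_le)
  show ?thesis
  proof (cases "S \<subseteq> ?U")
    case False
    then obtain v where v: "v \<in> S" "v \<notin> ?U" by auto
    have "W E t S s = 0" unfolding W_def using fS v by (intro prod_zero) auto
    moreover have "measure_pmf.expectation (phase E s) (W E (Suc t) S) = 0"
    proof (rule expect_zero)
      show "finite (set_pmf (phase E s))" by (rule finite_phase[OF fU])
      fix s' assume "s' \<in> set_pmf (phase E s)"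
      then have "v \<notin> fst s'" using set_phase v by blast
      then show "W E (Suc t) S s' = 0" unfolding W_def using fS v by (intro prod_zero) auto
    qed
    ultimately show ?thesis by simp
  next
    case True
    define M where "M = Mk s"
    define gf where "gf v = (if golden E s v then 64 else (1::real))" for v
    define c where "c = (\<Prod>v\<in>S. (gf v * Fp E t s v) powr th)"
    define Z where "Z = {m. \<forall>v\<in>S. m \<in> {m. v \<in> newU E ?U m}}"
    have fM: "finite (set_pmf M)" unfolding M_def by (rule finite_set_Pi_bern[OF fU])
    have "measure_pmf.expectation (phase E s) (W E (Suc t) S) =
          measure_pmf.expectation M (\<lambda>m. W E (Suc t) S (newU E ?U m, new_p E s))"
      unfolding phase_alt M_def by simp
    also have "\<dots> \<le> measure_pmf.expectation M (\<lambda>m. c * indicator Z m)"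
    proof (rule integral_mono)
      show "integrable (measure_pmf M) (\<lambda>m. W E (Suc t) S (newU E ?U m, new_p E s))"
        by (rule integrable_measure_pmf_finite[OF fM])
      show "integrable (measure_pmf M) (\<lambda>m. c * indicator Z m)"
        by (rule integrable_measure_pmf_finite[OF fM])
      fix m
      show "W E (Suc t) S (newU E ?U m, new_p E s) \<le> c * indicator Z m"
      proof (cases "m \<in> Z")
        case True
        then have inZ: "\<And>v. v \<in> S \<Longrightarrow> v \<in> newU E ?U m" by (auto simp: Z_def)
        have "W E (Suc t) S (newU E ?U m, new_p E s) = (\<Prod>v\<in>S. Fp E (Suc t) (newU E ?U m, new_p E s) v powr th)"
          unfolding W_def using inZ by (intro prod.cong) auto
        also have "\<dots> \<le> c" unfolding c_def
        proof (rule prod_mono)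
          fix v assume "v \<in> S"
          have "Fp E (Suc t) (newU E ?U m, new_p E s) v \<le> gf v * Fp E t s v"
            unfolding gf_def by (rule ratio[OF g pw newU_sub])
          then show "0 \<le> Fp E (Suc t) (newU E ?U m, new_p E s) v powr th \<and>
              Fp E (Suc t) (newU E ?U m, new_p E s) v powr th \<le> (gf v * Fp E t s v) powr th"
            using Fp_nonneg[of "(newU E ?U m, new_p E s)"] npos0
            by (auto intro!: powr_mono2 simp: th_def)
        qed
        finally show ?thesis using True by simp
      next
        case False
        then obtain v where "v \<in> S" "v \<notin> newU E ?U m" by (auto simp: Z_def)
        then have "W E (Suc t) S (newU E ?U m, new_p E s) = 0"
          unfolding W_def using fS by (intro prod_zero) auto
        then show ?thesis using False by simp
      qed
    qed
    also have "\<dots> = c * measure_pmf.prob M Z" by simp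
    also have "measure_pmf.prob M Z = (\<Prod>v\<in>S. measure_pmf.prob M {m. v \<in> newU E ?U m})"
      unfolding Z_def M_def
    proof (rule indep_blocks[OF fU fS, where B = "\<lambda>v. B2 E v \<inter> ?U"])
      show "disjoint_family_on (\<lambda>v. B2 E v \<inter> ?U) S"
        using fr unfolding far_def disjoint_family_on_def by blast
      fix k and m m' :: "'a \<Rightarrow> bool" assume "\<And>i. i \<in> B2 E k \<inter> ?U \<Longrightarrow> m i = m' i"
      then show "m \<in> {m. k \<in> newU E ?U m} \<longleftrightarrow> m' \<in> {m. k \<in> newU E ?U m}"
        using newU_local[of E k ?U m m'] by simp
    qed auto
    also have "c * (\<Prod>v\<in>S. measure_pmf.prob M {m. v \<in> newU E ?U m}) =
        (\<Prod>v\<in>S. (gf v * Fp E t s v) powr th * measure_pmf.prob M {m. v \<in> newU E ?U m})"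
      unfolding c_def by (simp add: prod.distrib)
    also have "\<dots> \<le> (\<Prod>v\<in>S. Fp E t s v powr th)"
    proof (rule prod_mono)
      fix v assume vS: "v \<in> S"
      have vU: "v \<in> ?U" using vS True by auto
      let ?P = "measure_pmf.prob M {m. v \<in> newU E ?U m}"
      have F0: "0 \<le> Fp E t s v" by (rule Fp_nonneg[OF pos0])
      have "(gf v * Fp E t s v) powr th * ?P \<le> Fp E t s v powr th"
      proof (cases "golden E s v")
        case True
        have "?P = 1 - measure_pmf.prob M {m. v \<notin> newU E ?U m}"
          using measure_pmf.prob_compl[of "{m. v \<notin> newU E ?U m}" M] by (simp add: Compl_eq_Diff_UNIV[symmetric] Collect_neg_eq[symmetric])
        also have "\<dots> \<le> 399/400"
          using golden_prob[OF g fU pw vU True] unfolding M_def by simp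
        finally have P: "?P \<le> 399/400" .
        have "(gf v * Fp E t s v) powr th * ?P = Fp E t s v powr th * (64 powr th * ?P)"
          using True by (simp add: gf_def powr_mult)
        also have "\<dots> \<le> Fp E t s v powr th * (64 powr th * (399/400))"
          using P by (intro mult_left_mono) auto
        also have "\<dots> \<le> Fp E t s v powr th * 1"
          using th_bound by (intro mult_left_mono) auto
        finally show ?thesis by simp
      next
        case False
        have "(gf v * Fp E t s v) powr th * ?P \<le> (gf v * Fp E t s v) powr th * 1"
          by (intro mult_left_mono) auto
        then show ?thesis using False by (simp add: gf_def)
      qed
      then show "0 \<le> (gf v * Fp E t s v) powr th * ?P \<and> (gf v * Fp E t s v) powr th * ?P \<le> Fp E t s v powr th"
        by auto
    qed
    also have "\<dots> = W E t S s" unfolding W_def using True by (intro prod.cong) auto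
    finally show ?thesis .
  qed
qed

lemma W_run:
  assumes g: "simple_graph V E" and fS: "finite S" and fr: "far E S"
  shows "(\<integral>\<^sup>+s. ennreal (W E k S s) \<partial>run V E k) \<le> ennreal (W E 0 S (V, \<lambda>_. 1/4))"
proof (induction k)
  case 0
  then show ?case by (simp add: W_nonneg)
next
  case (Suc k)
  have fV: "finite V" using g by (simp add: simple_graph_def)
  have "(\<integral>\<^sup>+s. ennreal (W E (Suc k) S s) \<partial>run V E (Suc k)) =
      (\<integral>\<^sup>+s. (\<integral>\<^sup>+s'. ennreal (W E (Suc k) S s') \<partial>phase E s) \<partial>run V E k)" by simp
  also have "\<dots> \<le> (\<integral>\<^sup>+s. ennreal (W E k S s) \<partial>run V E k)"
  proof (rule nn_integral_mono_AE, rule AE_pmfI)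
    fix s assume s: "s \<in> set_pmf (run V E k)"
    have iv: "ginv V s" by (rule run_inv[OF s])
    have fU: "finite (fst s)" using iv fV by (auto simp: ginv_def intro: finite_subset)
    have "(\<integral>\<^sup>+s'. ennreal (W E (Suc k) S s') \<partial>phase E s) =
          ennreal (measure_pmf.expectation (phase E s) (W E (Suc k) S))"
      by (intro nn_integral_eq_integral integrable_measure_pmf_finite finite_phase fU)
         (auto simp: W_nonneg)
    also have "\<dots> \<le> ennreal (W E k S s)"
      by (intro ennreal_leI W_step[OF g iv fS fr])
    finally show "(\<integral>\<^sup>+s'. ennreal (W E (Suc k) S s') \<partial>phase E s) \<le> ennreal (W E k S s)" .
  qed
  also have "\<dots> \<le> ennreal (W E 0 S (V, \<lambda>_. 1/4))" by (rule Suc.IH)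
  finally show ?case .
qed



lemma prob_undec:
  assumes g: "simple_graph V E" and fS: "finite S" and fr: "far E S" and SV: "S \<subseteq> V"
    and D1: "1 \<le> max_degree V E"
  shows "measure_pmf.prob (run V E T) {s. S \<subseteq> fst s} \<le>
     (((((real (max_degree V E))/4)^4) powr th) / ((2^T/256) powr th)) ^ card S"
proof -
  define a where "a = (((real (max_degree V E))/4)^4) powr th"
  define b where "b = ((2::real)^T/256) powr th"
  define n where "n = card S"
  have bpos: "0 < b" unfolding b_def by simp
  have fV: "finite V" using g by (simp add: simple_graph_def)
  have W0: "W E 0 S (V, \<lambda>_. 1/4) \<le> a ^ n"
  proof -
    have "W E 0 S (V, \<lambda>_. 1/4) \<le> (\<Prod>v\<in>S. a)"
      unfolding W_def
    proof (rule prod_mono)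
      fix v assume v: "v \<in> S"
      then have vV: "v \<in> V" using SV by auto
      have "eff_deg E (V, \<lambda>_. 1/4) v = real (card (nbrs E v \<inter> V)) / 4"
        by (simp add: eff_deg_def)
      also have "\<dots> \<le> real (max_degree V E) / 4"
      proof -
        have "card (nbrs E v \<inter> V) \<le> card (nbrs E v)"
          using nbrs_fin[OF g] by (intro card_mono) auto
        also have "\<dots> \<le> max_degree V E" by (rule card_nbrs_le[OF g])
        finally show ?thesis by simp
      qed
      finally have "Dm E (V, \<lambda>_. 1/4) v \<le> real (max_degree V E) / 4"
        using D1 by (simp add: Dm_def)
      moreover have "0 \<le> Dm E (V, \<lambda>_. 1/4) v" by (simp add: Dm_def)
      ultimately have "Dm E (V, \<lambda>_. 1/4) v ^ 4 \<le> (real (max_degree V E) / 4)^4"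
        by (intro power_mono) auto
      then have "Fp E 0 (V, \<lambda>_. 1/4) v \<le> (real (max_degree V E) / 4)^4"
        by (simp add: Fp_def)
      then have "Fp E 0 (V, \<lambda>_. 1/4) v powr th \<le> a"
        unfolding a_def by (intro powr_mono2) (auto simp: th_def Fp_def Dm_def)
      then show "0 \<le> (if v \<in> fst (V, \<lambda>_. 1/4) then Fp E 0 (V, \<lambda>_. 1/4) v powr th else 0) \<and>
          (if v \<in> fst (V, \<lambda>_. 1/4) then Fp E 0 (V, \<lambda>_. 1/4) v powr th else 0) \<le> a"
        using vV by simp
    qed
    then show ?thesis by (simp add: n_def)
  qed
  have Wlow: "b ^ n \<le> W E T S s" if s: "s \<in> set_pmf (run V E T)" and sub: "S \<subseteq> fst s" for s
  proof -
    have pw: "\<And>u. pow2 (snd s u)" using run_inv[OF s] by (simp add: ginv_def)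
    have "(\<Prod>v\<in>S. b) \<le> W E T S s"
      unfolding W_def
    proof (rule prod_mono)
      fix v assume v: "v \<in> S"
      have pb: "0 < snd s v" "snd s v \<le> 1/4" using pow2_bounds[OF pw[of v]] by auto
      have "(2::real)^T \<le> 2^T / (4 * snd s v)" using pb
        by (simp add: le_divide_eq)
      moreover have "(1/4::real)^4 \<le> Dm E s v ^ 4" by (intro power_mono) (auto simp: Dm_def)
      ultimately have m: "2^T * (1/4)^4 \<le> 2^T / (4 * snd s v) * Dm E s v ^ 4"
        using pb by (intro mult_mono) auto
      have e1: "(2::real)^T/256 = 2^T * (1/4)^4" by (simp add: power4_eq_xxxx)
      have "(2::real)^T/256 \<le> Fp E T s v" unfolding Fp_def e1 by (rule m)
      then have "b \<le> Fp E T s v powr th" unfolding b_def by (intro powr_mono2) (auto simp: th_def)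
      then show "0 \<le> b \<and> b \<le> (if v \<in> fst s then Fp E T s v powr th else 0)"
        using v sub bpos by auto
    qed
    then show ?thesis by (simp add: n_def)
  qed
  let ?A = "{s. S \<subseteq> fst s}"
  let ?P = "measure_pmf.prob (run V E T) ?A"
  have "ennreal (b^n) * emeasure (run V E T) ?A = (\<integral>\<^sup>+s. ennreal (b^n) * indicator ?A s \<partial>run V E T)"
    by (simp add: nn_integral_cmult_indicator)
  also have "\<dots> \<le> (\<integral>\<^sup>+s. ennreal (W E T S s) \<partial>run V E T)"
  proof (rule nn_integral_mono_AE, rule AE_pmfI)
    fix s assume s: "s \<in> set_pmf (run V E T)"
    show "ennreal (b^n) * indicator ?A s \<le> ennreal (W E T S s)"
      using Wlow[OF s] by (cases "s \<in> ?A") (auto intro: ennreal_leI)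
  qed
  also have "\<dots> \<le> ennreal (W E 0 S (V, \<lambda>_. 1/4))" by (rule W_run[OF g fS fr])
  also have "\<dots> \<le> ennreal (a^n)" using W0 by (rule ennreal_leI)
  finally have "ennreal (b^n * ?P) \<le> ennreal (a^n)"
    using bpos by (simp add: measure_pmf.emeasure_eq_measure ennreal_mult)
  then have "b^n * ?P \<le> a^n" by (simp add: a_def)
  then have "?P \<le> a^n / b^n" using bpos by (simp add: field_simps mult.commute)
  then show ?thesis by (simp add: a_def b_def n_def power_divide)
qed



lemma pow_le_fact: "real s ^ s \<le> 3 ^ s * fact s"
proof -
  let ?f = "\<lambda>n. real s ^ n /\<^sub>R fact n"
  have sm: "?f sums exp (real s)" by (rule exp_converges)
  have "sum ?f {s} \<le> suminf ?f"
    by (rule sum_le_suminf) (use sm sums_summable in auto)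
  then have "real s ^ s / fact s \<le> exp (real s)" using sums_unique[OF sm] by (simp add: divide_inverse mult.commute)
  also have "exp (real s) = exp 1 ^ s" using exp_of_nat_mult[of s 1] by (simp only: mult_1_right)
  also have "\<dots> \<le> 3 ^ s" by (intro power_mono exp_le) auto
  finally have h: "real s ^ s / fact s \<le> 3 ^ s" .
  have fp: "(0::real) < fact s" by simp
  show ?thesis using h fp by (simp only: pos_divide_le_eq)
qed

lemma choose_fact_le: "real (n choose s) * fact s \<le> real n ^ s"
proof (cases "s \<le> n")
  case True
  have "fact s * (n choose s) = fact n div fact (n - s)"
  proof -
    have e: "fact n = (fact s * (n choose s)) * fact (n - s)"
      using binomial_fact_lemma[OF True] by (simp only: ac_simps)
    show ?thesis unfolding e by simp
  qed
  also have "\<dots> \<le> n ^ s" by (rule fact_div_fact_le_pow[OF True])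
  finally have "fact s * (n choose s) \<le> n ^ s" .
  then have "real (fact s * (n choose s)) \<le> real (n ^ s)" by (simp only: of_nat_le_iff)
  then show ?thesis by (simp add: mult.commute)
next
  case False
  then have "n choose s = 0" by simp
  then have z: "real (n choose s) * fact s = 0" by (simp only: of_nat_0 mult_zero_left)
  have "0 \<le> real n ^ s" by simp
  then show ?thesis by (simp only: z)
qed

lemma s_le: "real s * (3/8) ^ s \<le> (1::real)"
proof -
  have "real s \<le> 2 ^ s"
  proof (induction s)
    case (Suc s)
    have "1 \<le> (2::real)^s" by simp
    moreover have "real (Suc s) = 1 + real s" "(2::real)^Suc s = 2 * 2^s" by simp_all
    ultimately show ?case using Suc by linarith
  qed simp
  also have "(2::real) ^ s \<le> (8/3) ^ s" by (intro power_mono) auto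
  finally have "real s * (3/8) ^ s \<le> (8/3) ^ s * (3/8) ^ s" by (intro mult_right_mono) auto
  also have "\<dots> = 1" by (simp add: power_mult_distrib[symmetric])
  finally show ?thesis .
qed

lemma numeric:
  fixes d q :: real and n s :: nat
  assumes d: "2 \<le> d" and s: "1 \<le> s" and n: "1 \<le> n" and nb: "real n \<le> d^5 * real s"
    and q: "0 \<le> q" "q \<le> 1 / d^13"
  shows "real (n choose s) * q ^ s \<le> 1 / real n"
proof -
  have dpos: "0 < d" using d by simp
  have "real (n choose s) * q ^ s \<le> real n ^ s / fact s * q ^ s"
    using choose_fact_le[of n s] q by (intro mult_right_mono) (auto simp: le_divide_eq)
  also have "\<dots> \<le> (d^5 * real s) ^ s / fact s * (1/d^13) ^ s"
    using nb q by (intro mult_mono divide_right_mono power_mono) auto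
  also have "\<dots> = (real s ^ s / fact s) * (1/d^8) ^ s"
    using dpos by (simp add: power_mult_distrib field_simps power_add[symmetric] flip: power_mult)
  also have "\<dots> \<le> 3 ^ s * (1/d^8) ^ s"
    using pow_le_fact[of s] by (intro mult_right_mono) (auto simp: divide_le_eq)
  finally have A: "real (n choose s) * q ^ s \<le> 3 ^ s * (1/d^8) ^ s" .
  have "real n * (3 ^ s * (1/d^8) ^ s) \<le> d^5 * real s * (3 ^ s * (1/d^8) ^ s)"
    using nb by (intro mult_right_mono) auto
  also have "\<dots> = real s * (3 ^ s * d^5 / d ^ (8 * s))"
  proof -
    have e: "(1/d^8)^s = 1 / d ^ (8 * s)" by (simp add: power_one_over power_mult)
    show ?thesis unfolding e by (simp add: field_simps)
  qed
  also have "\<dots> \<le> real s * (3 ^ s / d ^ (3 * s))"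
  proof -
    have "d^5 * d ^ (3 * s) \<le> d ^ (8 * s)"
    proof -
      have "d^5 * d ^ (3 * s) = d ^ (5 + 3 * s)" by (simp add: power_add)
      also have "\<dots> \<le> d ^ (8 * s)" using d s by (intro power_increasing) auto
      finally show ?thesis .
    qed
    then have "3 ^ s * d^5 / d ^ (8 * s) \<le> 3 ^ s / d ^ (3 * s)"
      using dpos by (simp add: field_simps)
    then show ?thesis by (intro mult_left_mono) auto
  qed
  also have "\<dots> = real s * (3 / d^3) ^ s" by (simp add: power_divide power_mult)
  also have "\<dots> \<le> real s * (3/8) ^ s"
  proof -
    have "(2::real)^3 \<le> d^3" using d by (intro power_mono) auto
    then have "3 / d^3 \<le> 3/8" using dpos by (simp add: divide_le_eq field_simps)
    then show ?thesis using dpos by (intro mult_left_mono power_mono) auto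
  qed
  also have "\<dots> \<le> 1" by (rule s_le)
  finally have B: "real n * (3 ^ s * (1/d^8) ^ s) \<le> 1" .
  have "real (n choose s) * q ^ s \<le> 3 ^ s * (1/d^8) ^ s" by (rule A)
  also have "\<dots> \<le> 1 / real n" using B n by (simp add: le_divide_eq mult.commute)
  finally show ?thesis .
qed

lemma ln2_ge: "1/2 \<le> ln (2::real)"
proof -
  have "exp (1/2::real) \<le> 2" using exp_bound_half[of "1/2::real"] by simp
  then have "ln (exp (1/2::real)) \<le> ln 2" by (subst ln_le_cancel_iff) auto
  then show ?thesis by simp
qed

lemma q_bound:
  fixes d :: real and T :: nat
  assumes d: "2 \<le> d" and T: "70000 * ln d \<le> real T"
  shows "(((d/4)^4) powr th) / (((2::real)^T/256) powr th) \<le> 1 / d^13"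
proof -
  have dpos: "0 < d" using d by simp
  have lnd: "0 \<le> ln d" using d by simp
  define x where "x = d^4 / 2^T"
  have xpos: "0 < x" unfolding x_def using dpos by simp
  have "(((d/4)^4) powr th) / (((2::real)^T/256) powr th) = (((d/4)^4) / (2^T/256)) powr th"
    by (rule powr_divide[symmetric])
  also have "((d/4)^4) / ((2::real)^T/256) = x"
    unfolding x_def by (simp add: power_divide field_simps)
  finally have e: "(((d/4)^4) powr th) / (((2::real)^T/256) powr th) = x powr th" .
  have lx: "ln x = 4 * ln d - real T * ln 2"
    unfolding x_def using dpos by (simp add: ln_div ln_realpow)
  have "real T * ln 2 \<ge> 70000 * ln d * (1/2)"
    using T ln2_ge lnd by (intro mult_mono) auto
  then have "ln x \<le> - 34996 * ln d" using lx by simp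
  then have "th * ln x \<le> th * (- 34996 * ln d)" by (intro mult_left_mono) (auto simp: th_def)
  also have "\<dots> \<le> - 13 * ln d" using lnd by (simp add: th_def)
  finally have "th * ln x \<le> - 13 * ln d" .
  then have "x powr th \<le> exp (- 13 * ln d)" using xpos by (simp add: powr_def mult.commute)
  also have "exp (- 13 * ln d) = 1 / d^13"
  proof -
    have l: "ln (d^13) = 13 * ln d" using dpos by (simp add: ln_realpow)
    have "exp (13 * ln d) = d^13" using dpos by (simp only: l[symmetric] exp_ln zero_less_power)
    then show ?thesis by (simp add: exp_minus inverse_eq_divide)
  qed
  finally show ?thesis using e by simp
qed



lemma B2_sym: "y \<in> B2 E w \<Longrightarrow> w \<in> B2 E y"
proof -
  assume "y \<in> B2 E w"
  then consider "y = w" | "y \<in> nbrs E w" | u where "u \<in> nbrs E w" "y \<in> nbrs E u"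
    unfolding B2_def by blast
  then show "w \<in> B2 E y"
  proof cases
    case 1 then show ?thesis by (simp add: B2_def)
  next
    case 2 then have "w \<in> nbrs E y" using nbrs_sym by metis
    then show ?thesis by (simp add: B2_def)
  next
    case (3 u)
    have "u \<in> nbrs E y" using 3(2) nbrs_sym by metis
    moreover have "w \<in> nbrs E u" using 3(1) nbrs_sym by metis
    ultimately show ?thesis unfolding B2_def by blast
  qed
qed

lemma self_B2: "v \<in> B2 E v" by (simp add: B2_def)

lemma card_B2:
  assumes g: "simple_graph V E" and D1: "1 \<le> max_degree V E"
  shows "finite (B2 E v)" "card (B2 E v) \<le> 3 * max_degree V E ^ 2"
proof -
  let ?D = "max_degree V E"
  let ?N = "nbrs E v"
  have fN: "finite ?N" by (rule nbrs_fin[OF g])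
  have fU: "finite (\<Union>u\<in>?N. nbrs E u)" using fN nbrs_fin[OF g] by auto
  show "finite (B2 E v)" unfolding B2_def using fN fU by auto
  have a1: "card (B2 E v) \<le> Suc (card (?N \<union> (\<Union>u\<in>?N. nbrs E u)))"
    unfolding B2_def by (rule card_insert_le_m1) auto
  have a2: "card (?N \<union> (\<Union>u\<in>?N. nbrs E u)) \<le> card ?N + card (\<Union>u\<in>?N. nbrs E u)"
    by (rule card_Un_le)
  have b1: "card (\<Union>u\<in>?N. nbrs E u) \<le> (\<Sum>u\<in>?N. card (nbrs E u))" by (rule card_UN_le[OF fN])
  have b2: "(\<Sum>u\<in>?N. card (nbrs E u)) \<le> card ?N * ?D"
    using sum_bounded_above[of ?N "\<lambda>u. card (nbrs E u)" ?D] card_nbrs_le[OF g] by simp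
  have c: "card ?N \<le> ?D" by (rule card_nbrs_le[OF g])
  have c2: "card ?N * ?D \<le> ?D * ?D" using c by (rule mult_right_mono) simp
  have d1: "1 \<le> ?D * ?D" "?D \<le> ?D * ?D" using D1 by (simp_all add: le_square)
  have sq: "?D ^ 2 = ?D * ?D" by (simp add: power2_eq_square)
  show "card (B2 E v) \<le> 3 * ?D ^ 2" unfolding sq using a1 a2 b1 b2 c c2 d1 by linarith
qed

definition conf :: "'a set set \<Rightarrow> 'a \<Rightarrow> 'a set" where
  "conf E u = (\<Union>x\<in>B2 E u. B2 E x)"

lemma conf_disj: "w \<notin> conf E u \<Longrightarrow> B2 E w \<inter> B2 E u = {}"
proof (rule ccontr)
  assume w: "w \<notin> conf E u" and ne: "B2 E w \<inter> B2 E u \<noteq> {}"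
  then obtain y where y: "y \<in> B2 E w" "y \<in> B2 E u" by blast
  have "w \<in> B2 E y" using y(1) by (rule B2_sym)
  then have "w \<in> conf E u" unfolding conf_def using y(2) by (rule UN_I[rotated])
  then show False using w by simp
qed

lemma card_conf:
  assumes g: "simple_graph V E" and D1: "1 \<le> max_degree V E"
  shows "finite (conf E u)" "card (conf E u) \<le> 9 * max_degree V E ^ 4"
proof -
  let ?D = "max_degree V E"
  show "finite (conf E u)" unfolding conf_def using card_B2(1)[OF g D1] by auto
  have "card (conf E u) \<le> (\<Sum>x\<in>B2 E u. card (B2 E x))"
    unfolding conf_def by (rule card_UN_le[OF card_B2(1)[OF g D1]])
  also have "\<dots> \<le> card (B2 E u) * (3 * ?D^2)"
    using sum_bounded_above[of "B2 E u" "\<lambda>x. card (B2 E x)" "3 * ?D^2"] card_B2(2)[OF g D1] by simp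
  also have "\<dots> \<le> (3 * ?D^2) * (3 * ?D^2)"
    using card_B2(2)[OF g D1] by (intro mult_right_mono) auto
  also have "\<dots> = 9 * ?D^4" by (simp add: power2_eq_square power4_eq_xxxx mult_ac)
  finally show "card (conf E u) \<le> 9 * ?D ^ 4" .
qed

lemma far_subset: "far E S \<Longrightarrow> S' \<subseteq> S \<Longrightarrow> far E S'"
  unfolding far_def by blast

lemma greedy_far:
  assumes g: "simple_graph V E" and D1: "1 \<le> max_degree V E" and fA: "finite A"
  shows "\<exists>S\<subseteq>A. far E S \<and> card A \<le> card S * (9 * max_degree V E ^ 4)"
  using fA
proof (induction "card A" arbitrary: A rule: less_induct)
  case less
  let ?M = "9 * max_degree V E ^ 4"
  show ?case
  proof (cases "A = {}")
    case True
    then show ?thesis by (intro exI[of _ "{}"]) (auto simp: far_def)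
  next
    case False
    then obtain u where u: "u \<in> A" by auto
    let ?A' = "A - conf E u"
    have uc: "u \<in> conf E u" unfolding conf_def by (rule UN_I[of u "B2 E u" u "B2 E", OF self_B2 self_B2])
    have ps: "?A' \<subset> A" using u uc by blast
    have lt: "card ?A' < card A" by (rule psubset_card_mono[OF less.prems ps])
    obtain S' where S': "S' \<subseteq> ?A'" "far E S'" "card ?A' \<le> card S' * ?M"
      using less.hyps[OF lt] less.prems by auto
    have uS': "u \<notin> S'" using S' uc by auto
    have fS': "finite S'" using S' less.prems finite_subset by blast
    have far: "far E (insert u S')"
      unfolding far_def
    proof (intro ballI impI)
      fix x y assume x: "x \<in> insert u S'" and y: "y \<in> insert u S'" and xy: "x \<noteq> y"
      show "B2 E x \<inter> B2 E y = {}"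
      proof (cases "x = u")
        case True
        then have "y \<in> S'" using y xy by auto
        then have "y \<notin> conf E u" using S' by auto
        then have "B2 E y \<inter> B2 E u = {}" by (rule conf_disj)
        then show ?thesis using True by (simp add: Int_commute)
      next
        case xu: False
        show ?thesis
        proof (cases "y = u")
          case True
          then have "x \<in> S'" using x xu by auto
          then have "x \<notin> conf E u" using S' by auto
          then have "B2 E x \<inter> B2 E u = {}" by (rule conf_disj)
          then show ?thesis using True by simp
        next
          case False
          then show ?thesis using x y xy xu S'(2) unfolding far_def by auto
        qed
      qed
    qed
    have "card A \<le> card (?A' \<union> conf E u)" using less.prems card_conf(1)[OF g D1]
      by (intro card_mono) auto
    also have "\<dots> \<le> card ?A' + card (conf E u)" by (rule card_Un_le)
    also have "\<dots> \<le> card S' * ?M + ?M" using S'(3) card_conf(2)[OF g D1, of u] by simp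
    also have "\<dots> = card (insert u S') * ?M" using uS' fS' by simp
    finally show ?thesis using far S' u by (intro exI[of _ "insert u S'"]) auto
  qed
qed

lemma undec_le:
  assumes g: "simple_graph V E" and fU: "finite (fst s)"
  shows "undecided_edges E s \<le> card (fst s) * max_degree V E"
proof -
  let ?U = "fst s"
  have sub: "{e \<in> E. e \<inter> ?U \<noteq> {}} \<subseteq> (\<Union>v\<in>?U. (\<lambda>u. {u, v}) ` nbrs E v)"
  proof
    fix e assume e: "e \<in> {e \<in> E. e \<inter> ?U \<noteq> {}}"
    then obtain v where v: "v \<in> e" "v \<in> ?U" by auto
    have "card e = 2" using e g by (auto simp: simple_graph_def)
    then obtain x y where xy: "e = {x, y}" "x \<noteq> y" by (auto simp: card_2_iff)
    show "e \<in> (\<Union>v\<in>?U. (\<lambda>u. {u, v}) ` nbrs E v)"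
    proof (cases "v = x")
      case True
      then have "e = {y, v}" "y \<in> nbrs E v" using xy e by (auto simp: nbrs_def insert_commute)
      then show ?thesis using v by blast
    next
      case False
      then have "v = y" using v xy by auto
      then have "e = {x, v}" "x \<in> nbrs E v" using xy e by (auto simp: nbrs_def)
      then show ?thesis using v by blast
    qed
  qed
  have "undecided_edges E s \<le> card (\<Union>v\<in>?U. (\<lambda>u. {u, v}) ` nbrs E v)"
    unfolding undecided_edges_def using fU nbrs_fin[OF g] by (intro card_mono sub) auto
  also have "\<dots> \<le> (\<Sum>v\<in>?U. card ((\<lambda>u. {u, v}) ` nbrs E v))" by (rule card_UN_le[OF fU])
  also have "\<dots> \<le> (\<Sum>v\<in>?U. max_degree V E)"
  proof (rule sum_mono)
    fix v show "card ((\<lambda>u. {u, v}) ` nbrs E v) \<le> max_degree V E"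
      using card_image_le[OF nbrs_fin[OF g], of "\<lambda>u. {u, v}" v] card_nbrs_le[OF g, of v] by linarith
  qed
  also have "\<dots> = card ?U * max_degree V E" by simp
  finally show ?thesis .
qed



lemma main_bound:
  fixes V :: "'a set" and E :: "'a set set"
  assumes g: "simple_graph V E" and ne: "V \<noteq> {}"
  shows "1 - 1 / real (card V) \<le> measure_pmf.prob (run V E (nat \<lceil>70000 * ln (real (max_degree V E))\<rceil>))
        {s. real (undecided_edges E s) \<le> 9 * real (card V)}"
proof -
  have fV: "finite V" using g by (simp add: simple_graph_def)
  define n where "n = card V"
  have n1: "1 \<le> n" using fV ne by (simp add: n_def card_gt_0_iff Suc_le_eq)
  define D where "D = max_degree V E"
  define T where "T = nat \<lceil>70000 * ln (real D)\<rceil>"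
  define Good where "Good = {s. real (undecided_edges E s) \<le> 9 * real (card V)}"
  let ?M = "run V E T"
  have supp: "real (undecided_edges E s) \<le> real (card (fst s)) * real D \<and> card (fst s) \<le> n \<and> fst s \<subseteq> V"
    if s: "s \<in> set_pmf ?M" for s
  proof -
    have sub: "fst s \<subseteq> V" using run_inv[OF s] by (simp add: ginv_def)
    have fU: "finite (fst s)" using sub fV finite_subset by blast
    have "undecided_edges E s \<le> card (fst s) * D" unfolding D_def by (rule undec_le[OF g fU])
    then have "real (undecided_edges E s) \<le> real (card (fst s) * D)" by (simp only: of_nat_le_iff)
    moreover have "card (fst s) \<le> n" unfolding n_def using sub fV by (rule card_mono[rotated])
    ultimately show ?thesis using sub by simp
  qed
  have bad: "measure_pmf.prob ?M (- Good) \<le> 1 / real n"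
  proof (cases "D \<le> 1")
    case True
    have "- Good \<inter> set_pmf ?M = {}"
    proof (rule ccontr)
      assume "- Good \<inter> set_pmf ?M \<noteq> {}"
      then obtain s where s: "s \<notin> Good" "s \<in> set_pmf ?M" by auto
      have h: "real (undecided_edges E s) \<le> real (card (fst s)) * real D" "card (fst s) \<le> n"
        using supp[OF s(2)] by auto
      have "real (card (fst s)) * real D \<le> real (card (fst s)) * 1"
        using True by (intro mult_left_mono) auto
      then have "real (undecided_edges E s) \<le> real n" using h by linarith
      then have "s \<in> Good" by (simp add: Good_def n_def)
      then show False using s by simp
    qed
    then have "measure_pmf.prob ?M (- Good) = 0"
      using measure_Int_set_pmf[of ?M "- Good"] by simp
    then show ?thesis by simp
  next
    case False
    then have D2: "2 \<le> D" by simp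
    have D1: "1 \<le> max_degree V E" using D2 by (simp add: D_def)
    have Dr: "(2::real) \<le> real D" using D2 by simp
    define sN where "sN = nat \<lceil>real n / real D ^ 5\<rceil>"
    have sN1: "1 \<le> sN"
    proof -
      have "0 < real n / real D ^ 5" using n1 D2 by simp
      then have "0 < \<lceil>real n / real D ^ 5\<rceil>" by simp
      then show ?thesis unfolding sN_def by linarith
    qed
    have nb: "real n \<le> real D ^ 5 * real sN"
    proof -
      have "real n / real D ^ 5 \<le> real sN" unfolding sN_def by (rule real_nat_ceiling_ge)
      then show ?thesis using D2 by (simp add: divide_le_eq mult.commute)
    qed
    define F where "F = {S. S \<subseteq> V \<and> card S = sN \<and> far E S}"
    define q where "q = ((((real D)/4)^4) powr th) / (((2::real)^T/256) powr th)"
    have q0: "0 \<le> q" unfolding q_def by simp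
    have qb: "q \<le> 1 / real D ^ 13" unfolding q_def
    proof (rule q_bound[OF Dr])
      show "70000 * ln (real D) \<le> real T" unfolding T_def by (rule real_nat_ceiling_ge)
    qed
    have cover: "- Good \<inter> set_pmf ?M \<subseteq> (\<Union>S\<in>F. {s. S \<subseteq> fst s})"
    proof
      fix s assume "s \<in> - Good \<inter> set_pmf ?M"
      then have s: "s \<notin> Good" "s \<in> set_pmf ?M" by auto
      have h: "real (undecided_edges E s) \<le> real (card (fst s)) * real D" "fst s \<subseteq> V"
        using supp[OF s(2)] by auto
      have fU: "finite (fst s)" using h(2) fV finite_subset by blast
      obtain S0 where S0: "S0 \<subseteq> fst s" "far E S0" "card (fst s) \<le> card S0 * (9 * D ^ 4)"
        using greedy_far[OF g D1 fU] unfolding D_def by blast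
      have "9 * real n < real (undecided_edges E s)" using s(1) by (simp add: Good_def n_def)
      also have "\<dots> \<le> real (card (fst s)) * real D" by (rule h(1))
      also have "\<dots> \<le> real (card S0 * (9 * D ^ 4)) * real D"
        using S0(3) by (intro mult_right_mono) (simp only: of_nat_le_iff, simp)
      also have "\<dots> = 9 * (real (card S0) * real D ^ 5)" by (simp add: power_Suc[symmetric] mult_ac eval_nat_numeral)
      finally have "real n < real (card S0) * real D ^ 5" by simp
      then have "real n / real D ^ 5 \<le> real (card S0)" using D2 by (simp add: divide_le_eq mult.commute)
      then have "sN \<le> card S0" unfolding sN_def by simp
      then obtain S where S: "S \<subseteq> S0" "card S = sN" by (meson obtain_subset_with_card_n)
      have "S \<in> F" unfolding F_def using S S0 h(2) far_subset by blast
      moreover have "s \<in> {s. S \<subseteq> fst s}" using S S0 by auto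
      ultimately show "s \<in> (\<Union>S\<in>F. {s. S \<subseteq> fst s})" by blast
    qed
    have "F \<subseteq> Pow V" by (auto simp: F_def)
    then have finF: "finite F" using fV by (simp add: finite_subset)
    have "measure_pmf.prob ?M (- Good) = measure_pmf.prob ?M (- Good \<inter> set_pmf ?M)"
      by (rule measure_Int_set_pmf[symmetric])
    also have "\<dots> \<le> measure_pmf.prob ?M (\<Union>S\<in>F. {s. S \<subseteq> fst s})"
      by (rule measure_pmf.finite_measure_mono[OF cover]) simp
    also have "\<dots> \<le> (\<Sum>S\<in>F. measure_pmf.prob ?M {s. S \<subseteq> fst s})"
      by (rule measure_pmf.finite_measure_subadditive_finite[OF finF]) simp
    also have "\<dots> \<le> (\<Sum>S\<in>F. q ^ sN)"
    proof (rule sum_mono)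
      fix S assume "S \<in> F"
      then have S: "S \<subseteq> V" "card S = sN" "far E S" by (auto simp: F_def)
      have fS: "finite S" using S(1) fV finite_subset by blast
      have "measure_pmf.prob ?M {s. S \<subseteq> fst s} \<le>
        (((((real (max_degree V E))/4)^4) powr th) / (((2::real)^T/256) powr th)) ^ card S"
        by (rule prob_undec[OF g fS S(3) S(1) D1])
      then show "measure_pmf.prob ?M {s. S \<subseteq> fst s} \<le> q ^ sN" using S(2) by (simp add: q_def D_def)
    qed
    also have "\<dots> = real (card F) * q ^ sN" by simp
    also have "\<dots> \<le> real (n choose sN) * q ^ sN"
    proof -
      have "card F \<le> card {S. S \<subseteq> V \<and> card S = sN}"
        using fV by (intro card_mono) (auto simp: F_def)
      also have "\<dots> = n choose sN" unfolding n_def by (rule n_subsets[OF fV])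
      finally show ?thesis using q0 by (intro mult_right_mono) auto
    qed
    also have "\<dots> \<le> 1 / real n" by (rule numeric[OF Dr sN1 n1 nb q0 qb])
    finally show ?thesis .
  qed
  have "measure_pmf.prob ?M Good = 1 - measure_pmf.prob ?M (- Good)"
    using measure_pmf.prob_compl[of "- Good" ?M] by (simp add: Compl_eq_Diff_UNIV[symmetric])
  then have "1 - 1 / real n \<le> measure_pmf.prob ?M Good" using bad by linarith
  then show ?thesis by (simp add: n_def Good_def T_def D_def)
qed

theorem corollary1:
  shows "\<exists>c::real. \<exists>C::real. \<forall>(V::nat set) (E::nat set set).
     simple_graph V E \<and> V \<noteq> {} \<longrightarrow>
     measure_pmf.prob (run V E (nat \<lceil>c * ln (real (max_degree V E))\<rceil>))
        {s. real (undecided_edges E s) \<le> C * real (card V)}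
       \<ge> 1 - 1 / real (card V)"
  using main_bound by blast

end
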